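(* Let $R$ be a skew invertible R-matrix on $V\otimes V$. Define $J_1=I$, $J_{k+1}=R_kJ_kR_k$ and $\Upsilon^{(1)}_R=1$, $\Upsilon^{(k+1)}_R=(R_1R_2\cdots R_k)\Upsilon^{(k)}_R$ for $k\ge1$. Then for every $i\ge1$, $$\mathrm{Tr}_{R(i+1,\dots,2i)}\,\Upsilon^{(2i)}_R=\bigl(\Upsilon^{(i)}_R\bigr)^4=\bigl(J_1J_2\cdots J_i\bigr)^2 .$$
   Context: $V$ is a finite-dimensional complex vector space, $I=\mathrm{id}_V$, $P$ the flip. For an operator $X$ on $V\otimes V$, $X_k$ acts in tensor factors $k,k+1$ of $V^{\otimes m}$ and $X_{kl}$ in factors $k,l$. An R-matrix is an invertible $R$ with $R_1R_2R_1=R_2R_1R_2$; it is skew invertible if there is $\Psi$ with $\mathrm{Tr}_{(2)}(R_{12}\Psi_{23})=\mathrm{Tr}_{(2)}(\Psi_{12}R_{23})=P_{13}$ ($\mathrm{Tr}_{(k)}$ = partial trace over factor $k$). Then $(D_R)_1:=\mathrm{Tr}_{(2)}\Psi_{12}$ and the R-trace over factor $k$ is $\mathrm{Tr}_{R(k)}(Y)=\mathrm{Tr}_{(k)}((D_R)_kY)$; $\mathrm{Tr}_{R(k,\dots,l)}$ is the composition over factors $k,\dots,l$. *)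

theory Defs
  imports Complex_Main
begin

text \<open>Concrete model: V = C^n with its standard basis.  An operator on the tensor
power V^{\<otimes>m} is given by its matrix entries, indexed by multi-indices
(lists of length m with entries < n): A x y is the (x,y) entry.  Only entries with
x, y in idx n m are meaningful; equality of operators is op_eq.\<close>

type_synonym op = "nat list \<Rightarrow> nat list \<Rightarrow> complex"

definition idx :: "nat \<Rightarrow> nat \<Rightarrow> nat list set" where
  "idx n m = {xs. length xs = m \<and> (\<forall>a\<in>set xs. a < n)}"

definition op_eq :: "nat \<Rightarrow> nat \<Rightarrow> op \<Rightarrow> op \<Rightarrow> bool" where
  "op_eq n m A B \<longleftrightarrow> (\<forall>x\<in>idx n m. \<forall>y\<in>idx n m. A x y = B x y)"

definition op_id :: op where
  "op_id x y = (if x = y then 1 else 0)"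

definition op_flip :: op where
  "op_flip x y = (if x = [y!1, y!0] then 1 else 0)"

definition op_mult :: "nat \<Rightarrow> nat \<Rightarrow> op \<Rightarrow> op \<Rightarrow> op" where
  "op_mult n m A B = (\<lambda>x y. \<Sum>z\<in>idx n m. A x z * B z y)"

primrec op_pow :: "nat \<Rightarrow> nat \<Rightarrow> op \<Rightarrow> nat \<Rightarrow> op" where
  "op_pow n m A 0 = op_id"
| "op_pow n m A (Suc k) = op_mult n m A (op_pow n m A k)"

primrec op_prod :: "nat \<Rightarrow> nat \<Rightarrow> op list \<Rightarrow> op" where
  "op_prod n m [] = op_id"
| "op_prod n m (A # As) = op_mult n m A (op_prod n m As)"

text \<open>X_{kl}: an operator X on V \<otimes> V acting in tensor factors k, l (1-based).\<close>
definition emb2 :: "nat \<Rightarrow> nat \<Rightarrow> op \<Rightarrow> op" where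
  "emb2 k l X = (\<lambda>x y. X [x!(k-1), x!(l-1)] [y!(k-1), y!(l-1)] *
      (if (\<forall>j<length x. j \<noteq> k-1 \<and> j \<noteq> l-1 \<longrightarrow> x!j = y!j) then 1 else 0))"

text \<open>D_k: an operator D on V acting in tensor factor k (1-based).\<close>
definition emb1 :: "nat \<Rightarrow> op \<Rightarrow> op" where
  "emb1 k D = (\<lambda>x y. D [x!(k-1)] [y!(k-1)] *
      (if (\<forall>j<length x. j \<noteq> k-1 \<longrightarrow> x!j = y!j) then 1 else 0))"

text \<open>Partial trace Tr_(k) over tensor factor k (1-based); maps operators on
V^{\<otimes>m} to operators on V^{\<otimes>(m-1)}.\<close>
definition ptr :: "nat \<Rightarrow> nat \<Rightarrow> op \<Rightarrow> op" where
  "ptr n k Y = (\<lambda>x y. \<Sum>a<n. Y (take (k-1) x @ a # drop (k-1) x)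
                                 (take (k-1) y @ a # drop (k-1) y))"

text \<open>R-trace Tr_{R(k)} Y = Tr_(k)((D_R)_k Y) for Y on V^{\<otimes>m}.\<close>
definition rtr :: "nat \<Rightarrow> nat \<Rightarrow> op \<Rightarrow> nat \<Rightarrow> op \<Rightarrow> op" where
  "rtr n m D k Y = ptr n k (op_mult n m (emb1 k D) Y)"

text \<open>R-trace over the last j factors of an operator on V^{\<otimes>m}:
rtr_last n m D j Y = Tr_{R(m-j+1)} ( ... Tr_{R(m)} Y ...).\<close>
primrec rtr_last :: "nat \<Rightarrow> nat \<Rightarrow> op \<Rightarrow> nat \<Rightarrow> op \<Rightarrow> op" where
  "rtr_last n m D 0 Y = Y"
| "rtr_last n m D (Suc j) Y = rtr_last n (m - 1) D j (rtr n m D m Y)"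

definition Rk :: "op \<Rightarrow> nat \<Rightarrow> op" where
  "Rk R k = emb2 k (Suc k) R"

fun Jop :: "nat \<Rightarrow> nat \<Rightarrow> op \<Rightarrow> nat \<Rightarrow> op" where
  "Jop n m R 0 = op_id"
| "Jop n m R (Suc 0) = op_id"
| "Jop n m R (Suc (Suc k)) =
     op_mult n m (op_mult n m (Rk R (Suc k)) (Jop n m R (Suc k))) (Rk R (Suc k))"

fun Ups :: "nat \<Rightarrow> nat \<Rightarrow> op \<Rightarrow> nat \<Rightarrow> op" where
  "Ups n m R 0 = op_id"
| "Ups n m R (Suc 0) = op_id"
| "Ups n m R (Suc (Suc k)) =
     op_mult n m (op_prod n m (map (Rk R) [1..<Suc (Suc k)])) (Ups n m R (Suc k))"

end

theory Submission
  imports Defs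
begin

lemma idx_len: "x \<in> idx n m \<Longrightarrow> length x = m" by (simp add: idx_def)

lemma finite_idx: "finite (idx n m)"
proof -
  have "idx n m = {xs. set xs \<subseteq> {..<n} \<and> length xs = m}" by (auto simp: idx_def)
  thus ?thesis using finite_lists_length_eq[of "{..<n}" m] by simp
qed

lemma idx_Suc: "idx n (Suc m) = (\<lambda>(a,xs). a # xs) ` ({..<n} \<times> idx n m)"
proof (rule set_eqI, rule iffI)
  fix x assume "x \<in> idx n (Suc m)"
  then show "x \<in> (\<lambda>(a,xs). a # xs) ` ({..<n} \<times> idx n m)"
    by (cases x) (auto simp: idx_def image_iff)
qed (auto simp: idx_def)

lemma sum_idx_Suc: "(\<Sum>x\<in>idx n (Suc m). f x) = (\<Sum>a<n. \<Sum>xs\<in>idx n m. f (a # xs))"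
proof -
  have inj: "inj_on (\<lambda>(a,xs). a # xs) ({..<n} \<times> idx n m)" by (auto simp: inj_on_def)
  have "(\<Sum>x\<in>idx n (Suc m). f x) = (\<Sum>p\<in>{..<n} \<times> idx n m. f ((\<lambda>(a,xs). a # xs) p))"
    unfolding idx_Suc by (rule sum.reindex[OF inj, unfolded comp_def])
  also have "\<dots> = (\<Sum>a<n. \<Sum>xs\<in>idx n m. f (a # xs))"
    by (simp add: sum.cartesian_product split_def)
  finally show ?thesis .
qed

lemma idx_0: "idx n 0 = {[]}" by (auto simp: idx_def)

lemma sum_idx_1: "(\<Sum>x\<in>idx n (Suc 0). f x) = (\<Sum>a<n. f [a])"
  by (simp add: sum_idx_Suc idx_0)

lemma sum_idx_split: "(\<Sum>x\<in>idx n (p+q). f x) = (\<Sum>u\<in>idx n p. \<Sum>v\<in>idx n q. f (u @ v))"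
proof (induction p arbitrary: f)
  case 0 then show ?case by (simp add: idx_0)
next
  case (Suc p)
  have "(\<Sum>x\<in>idx n (Suc p + q). f x) = (\<Sum>a<n. \<Sum>xs\<in>idx n (p+q). f (a # xs))"
    by (simp add: sum_idx_Suc)
  also have "\<dots> = (\<Sum>a<n. \<Sum>u\<in>idx n p. \<Sum>v\<in>idx n q. f (a # u @ v))"
    using Suc.IH by simp
  also have "\<dots> = (\<Sum>u\<in>idx n (Suc p). \<Sum>v\<in>idx n q. f (u @ v))"
    by (simp add: sum_idx_Suc)
  finally show ?case .
qed

lemma idx_append_iff: "u @ v \<in> idx n m \<longleftrightarrow> length u + length v = m \<and> u \<in> idx n (length u) \<and> v \<in> idx n (length v)"
  by (auto simp: idx_def)

definition nm :: "nat \<Rightarrow> nat \<Rightarrow> op \<Rightarrow> op" where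
  "nm n m A = (\<lambda>x y. if x \<in> idx n m \<and> y \<in> idx n m then A x y else 0)"

definition M :: "nat \<Rightarrow> nat \<Rightarrow> op \<Rightarrow> op \<Rightarrow> op" where
  "M n m A B = nm n m (op_mult n m A B)"

definition tens :: "nat \<Rightarrow> op \<Rightarrow> op \<Rightarrow> op" where
  "tens p A B = (\<lambda>x y. A (take p x) (take p y) * B (drop p x) (drop p y))"

lemma op_eq_nm: "op_eq n m A B \<longleftrightarrow> nm n m A = nm n m B"
  unfolding op_eq_def nm_def by (auto simp: fun_eq_iff)

lemma nm_nm[simp]: "nm n m (nm n m A) = nm n m A"
  by (simp add: nm_def fun_eq_iff)

lemma nm_M[simp]: "nm n m (M n m A B) = M n m A B"
  by (simp add: M_def)

lemma op_mult_nm_left: "x \<in> idx n m \<Longrightarrow> op_mult n m (nm n m A) B x y = op_mult n m A B x y"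
  unfolding op_mult_def nm_def by (rule sum.cong) auto

lemma op_mult_nm_right: "y \<in> idx n m \<Longrightarrow> op_mult n m A (nm n m B) x y = op_mult n m A B x y"
  unfolding op_mult_def nm_def by (rule sum.cong) auto

lemma M_nm_left[simp]: "M n m (nm n m A) B = M n m A B"
  unfolding M_def nm_def[of n m "op_mult n m (nm n m A) B"] nm_def[of n m "op_mult n m A B"]
  by (auto simp: fun_eq_iff op_mult_nm_left)

lemma M_nm_right[simp]: "M n m A (nm n m B) = M n m A B"
  unfolding M_def nm_def[of n m "op_mult n m A (nm n m B)"] nm_def[of n m "op_mult n m A B"]
  by (auto simp: fun_eq_iff op_mult_nm_right)

lemma op_mult_assoc: "op_mult n m (op_mult n m A B) C = op_mult n m A (op_mult n m B C)"
  unfolding op_mult_def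
proof (rule ext, rule ext)
  fix x y
  have "(\<Sum>z\<in>idx n m. (\<Sum>w\<in>idx n m. A x w * B w z) * C z y) = (\<Sum>z\<in>idx n m. \<Sum>w\<in>idx n m. A x w * B w z * C z y)"
    by (simp add: sum_distrib_right)
  also have "\<dots> = (\<Sum>w\<in>idx n m. \<Sum>z\<in>idx n m. A x w * (B w z * C z y))"
    by (subst sum.swap) (simp add: mult.assoc)
  also have "\<dots> = (\<Sum>w\<in>idx n m. A x w * (\<Sum>z\<in>idx n m. B w z * C z y))"
    by (simp add: sum_distrib_left)
  finally show "(\<Sum>z\<in>idx n m. (\<Sum>w\<in>idx n m. A x w * B w z) * C z y) = (\<Sum>w\<in>idx n m. A x w * (\<Sum>z\<in>idx n m. B w z * C z y))" .
qed

lemma M_assoc: "M n m (M n m A B) C = M n m A (M n m B C)"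
proof -
  have "M n m (M n m A B) C = M n m (op_mult n m A B) C" unfolding M_def[of n m A B] by simp
  also have "\<dots> = M n m A (op_mult n m B C)" by (simp add: M_def op_mult_assoc)
  also have "\<dots> = M n m A (M n m B C)" unfolding M_def[of n m B C] by simp
  finally show ?thesis .
qed

lemma op_mult_id_left: "x \<in> idx n m \<Longrightarrow> op_mult n m op_id B x y = B x y"
proof -
  assume x: "x \<in> idx n m"
  have "\<And>z. op_id x z * B z y = (if x = z then B x y else 0)" by (simp add: op_id_def)
  then show ?thesis unfolding op_mult_def using x by (simp add: finite_idx)
qed

lemma op_mult_id_right: "y \<in> idx n m \<Longrightarrow> op_mult n m A op_id x y = A x y"
proof -
  assume y: "y \<in> idx n m"
  have "\<And>z. A x z * op_id z y = (if y = z then A x y else 0)" by (auto simp: op_id_def)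
  then show ?thesis unfolding op_mult_def using y by (simp add: finite_idx)
qed

lemma M_id_left[simp]: "M n m op_id B = nm n m B"
  unfolding M_def nm_def by (auto simp: fun_eq_iff op_mult_id_left)

lemma M_id_right[simp]: "M n m A op_id = nm n m A"
  unfolding M_def nm_def by (auto simp: fun_eq_iff op_mult_id_right)

lemma nm_M_cong: "nm n m A = nm n m A' \<Longrightarrow> nm n m B = nm n m B' \<Longrightarrow> M n m A B = M n m A' B'"
  by (metis M_nm_left M_nm_right)

lemma tens_mult: "op_mult n (p+q) (tens p A B) (tens p C D) = tens p (op_mult n p A C) (op_mult n q B D)"
proof (rule ext, rule ext)
  fix x y
  have "op_mult n (p+q) (tens p A B) (tens p C D) x y =
        (\<Sum>u\<in>idx n p. \<Sum>v\<in>idx n q. tens p A B x (u@v) * tens p C D (u@v) y)"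
    unfolding op_mult_def by (rule sum_idx_split)
  also have "\<dots> = (\<Sum>u\<in>idx n p. \<Sum>v\<in>idx n q. (A (take p x) u * C u (take p y)) * (B (drop p x) v * D v (drop p y)))"
  proof (rule sum.cong[OF refl], rule sum.cong[OF refl])
    fix u v assume u: "u \<in> idx n p" and v: "v \<in> idx n q"
    then have lu: "length u = p" by (simp add: idx_len)
    show "tens p A B x (u @ v) * tens p C D (u @ v) y = (A (take p x) u * C u (take p y)) * (B (drop p x) v * D v (drop p y))"
      unfolding tens_def using lu by (simp add: ac_simps)
  qed
  also have "\<dots> = (\<Sum>u\<in>idx n p. A (take p x) u * C u (take p y)) * (\<Sum>v\<in>idx n q. B (drop p x) v * D v (drop p y))"
    by (rule sum_product[symmetric])
  also have "\<dots> = tens p (op_mult n p A C) (op_mult n q B D) x y"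
    by (simp only: tens_def op_mult_def)
  finally show "op_mult n (p+q) (tens p A B) (tens p C D) x y = tens p (op_mult n p A C) (op_mult n q B D) x y" .
qed

lemma tens_id: "tens p op_id op_id = op_id"
proof (rule ext, rule ext)
  fix x y :: "nat list"
  show "tens p op_id op_id x y = op_id x y"
  proof (cases "x = y")
    case True then show ?thesis by (simp add: tens_def op_id_def)
  next
    case False
    then have "take p x \<noteq> take p y \<or> drop p x \<noteq> drop p y" by (metis append_take_drop_id)
    then show ?thesis using False by (auto simp add: tens_def op_id_def)
  qed
qed

lemma idx_take: "x \<in> idx n (p+q) \<Longrightarrow> take p x \<in> idx n p"
  by (auto simp: idx_def dest: in_set_takeD)
lemma idx_drop: "x \<in> idx n (p+q) \<Longrightarrow> drop p x \<in> idx n q"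
  by (auto simp: idx_def dest: in_set_dropD)

lemma nm_tens: "nm n (p+q) (tens p (nm n p A) (nm n q B)) = nm n (p+q) (tens p A B)"
proof (rule ext, rule ext)
  fix x y
  show "nm n (p+q) (tens p (nm n p A) (nm n q B)) x y = nm n (p+q) (tens p A B) x y"
  proof (cases "x \<in> idx n (p+q) \<and> y \<in> idx n (p+q)")
    case True
    then have "take p x \<in> idx n p" "take p y \<in> idx n p" "drop p x \<in> idx n q" "drop p y \<in> idx n q"
      by (auto intro: idx_take idx_drop)
    then show ?thesis using True by (simp add: nm_def tens_def)
  next
    case False then show ?thesis unfolding nm_def[of n "p+q"] by (simp only: if_False)
  qed
qed

lemma nm_tens_cong: "nm n p A = nm n p A' \<Longrightarrow> nm n q B = nm n q B' \<Longrightarrow>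
   nm n (p+q) (tens p A B) = nm n (p+q) (tens p A' B')"
  by (metis nm_tens)

lemma M_tens: "M n (p+q) (tens p A B) (tens p C D) = nm n (p+q) (tens p (M n p A C) (M n q B D))"
  unfolding M_def tens_mult by (rule nm_tens[symmetric])

definition pc :: "nat \<Rightarrow> nat \<Rightarrow> nat list" where "pc c k = [Suc c..<Suc (c+k)]"
definition qc :: "nat \<Rightarrow> nat \<Rightarrow> nat list" where "qc c k = rev (pc c k)"
definition pw :: "nat list \<Rightarrow> nat \<Rightarrow> nat list" where "pw w j = concat (replicate j w)"

primrec uw :: "nat \<Rightarrow> nat list" where
  "uw 0 = []" | "uw (Suc k) = pc 0 k @ uw k"
primrec om :: "nat \<Rightarrow> nat \<Rightarrow> nat list" where
  "om a 0 = []" | "om a (Suc c) = pc c a @ om a c"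
fun jw :: "nat \<Rightarrow> nat list" where
  "jw 0 = []" | "jw (Suc 0) = []" | "jw (Suc (Suc k)) = Suc k # jw (Suc k) @ [Suc k]"
definition JJ :: "nat \<Rightarrow> nat list" where "JJ k = concat (map jw [1..<Suc k])"

inductive beq :: "nat list \<Rightarrow> nat list \<Rightarrow> bool" where
  brefl: "beq w w"
| bsym: "beq u v \<Longrightarrow> beq v u"
| btrans: "beq u v \<Longrightarrow> beq v w \<Longrightarrow> beq u w"
| bctx: "beq u v \<Longrightarrow> beq (p @ u @ s) (p @ v @ s)"
| bbraid: "beq [k, Suc k, k] [Suc k, k, Suc k]"
| bcomm: "Suc k < l \<Longrightarrow> beq [k, l] [l, k]"

declare beq.btrans[trans]

lemma beq_set: "beq u v \<Longrightarrow> set u = set v"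
  by (induction rule: beq.induct) auto

lemma beq_app: "beq u u' \<Longrightarrow> beq v v' \<Longrightarrow> beq (u @ v) (u' @ v')"
proof -
  assume a: "beq u u'" and b: "beq v v'"
  have "beq ([] @ u @ v) ([] @ u' @ v)" by (rule beq.bctx[OF a])
  moreover have "beq (u' @ v @ []) (u' @ v' @ [])" by (rule beq.bctx[OF b])
  ultimately show ?thesis by (auto intro: beq.btrans)
qed

lemma beq_appL: "beq v v' \<Longrightarrow> beq (u @ v) (u @ v')" by (rule beq_app[OF beq.brefl])
lemma beq_appR: "beq u u' \<Longrightarrow> beq (u @ v) (u' @ v)" by (rule beq_app[OF _ beq.brefl])

lemma beq_rev: "beq u v \<Longrightarrow> beq (rev u) (rev v)"
proof (induction rule: beq.induct)
  case (bctx u v p s) then show ?case using beq.bctx[of "rev u" "rev v" "rev s" "rev p"] by simp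
next
  case (bcomm k l) then show ?case by (simp add: beq.bsym beq.bcomm)
qed (auto intro: beq.intros)

definition far :: "nat \<Rightarrow> nat \<Rightarrow> bool" where "far x y \<longleftrightarrow> Suc x < y \<or> Suc y < x"

lemma beq_comm2: "far x y \<Longrightarrow> beq [x, y] [y, x]"
  unfolding far_def using beq.bcomm beq.bsym by blast

lemma comm1: "\<forall>y\<in>set w. far x y \<Longrightarrow> beq ([x] @ w) (w @ [x])"
proof (induction w)
  case Nil then show ?case by (simp add: beq.brefl)
next
  case (Cons y w)
  have "beq ([x, y] @ w) ([y, x] @ w)" by (rule beq_appR, rule beq_comm2) (use Cons.prems in simp)
  moreover have "beq ([y] @ ([x] @ w)) ([y] @ (w @ [x]))" by (rule beq_appL) (use Cons in simp)
  ultimately show ?case by (auto intro: beq.btrans)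
qed

lemma commw: "\<forall>x\<in>set u. \<forall>y\<in>set w. far x y \<Longrightarrow> beq (u @ w) (w @ u)"
proof (induction u)
  case Nil then show ?case by (simp add: beq.brefl)
next
  case (Cons x u)
  have "beq ([x] @ (u @ w)) ([x] @ (w @ u))" by (rule beq_appL) (use Cons in simp)
  moreover have "beq (([x] @ w) @ u) ((w @ [x]) @ u)" by (rule beq_appR, rule comm1) (use Cons.prems in simp)
  ultimately show ?case by (auto intro: beq.btrans)
qed

lemma set_pc: "set (pc c k) = {Suc c..<Suc (c+k)}" unfolding pc_def by (rule set_upt)
lemma set_qc: "set (qc c k) = {Suc c..<Suc (c+k)}" unfolding qc_def set_rev by (rule set_pc)

lemma pc_split: "a \<le> k \<Longrightarrow> pc c k = pc c a @ pc (c+a) (k-a)"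
proof -
  assume "a \<le> k"
  then have e: "Suc (c+k) = Suc (c+a) + (k-a)" "Suc (c + a + (k - a)) = Suc (c+a) + (k-a)" by simp_all
  show ?thesis unfolding pc_def e by (rule upt_add_eq_append) simp
qed
lemma pc_Suc: "pc c (Suc k) = pc c k @ [Suc (c+k)]" by (simp add: pc_def)
lemma pc_Suc2: "pc c (Suc k) = Suc c # pc (Suc c) k" by (simp add: pc_def upt_conv_Cons)
lemma qc_Suc: "qc c (Suc k) = Suc (c+k) # qc c k" by (simp add: qc_def pc_Suc)
lemma pc_0[simp]: "pc c 0 = []" by (simp add: pc_def)
lemma qc_0[simp]: "qc c 0 = []" by (simp add: qc_def)
lemma map_Suc_pc: "map Suc (pc c k) = pc (Suc c) k" by (simp add: pc_def map_Suc_upt)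
lemma map_Suc_qc: "map Suc (qc c k) = qc (Suc c) k" by (simp add: qc_def rev_map[symmetric] map_Suc_pc)

lemma L1:
  assumes "1 \<le> j" "j < k"
  shows "beq (pc c k @ [c+j]) ([Suc (c+j)] @ pc c k)"
proof -
  define P where "P = pc c (j-1)"
  define S where "S = pc (Suc (c+j)) (k-j-1)"
  have dec: "pc c k = P @ [c+j, Suc (c+j)] @ S"
  proof -
    have "pc c k = pc c (j-1) @ pc (c+(j-1)) (k-(j-1))" using assms by (intro pc_split) simp
    moreover have "k - (j-1) = Suc (Suc (k-j-1))" using assms by simp
    moreover have "c + (j-1) = c + j - 1" using assms by simp
    ultimately show ?thesis unfolding P_def S_def using assms
      by (simp add: pc_Suc2)
  qed
  have fS: "\<forall>y\<in>set S. far (c+j) y" by (auto simp: S_def set_pc far_def)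
  have fP: "\<forall>y\<in>set P. far (Suc (c+j)) y" using assms by (auto simp: P_def set_pc far_def)
  have "beq (P @ [c+j, Suc (c+j)] @ (S @ [c+j])) (P @ [c+j, Suc (c+j)] @ ([c+j] @ S))"
    by (rule beq_appL, rule beq_appL, rule beq.bsym, rule comm1[OF fS])
  moreover have "beq (P @ [c+j, Suc (c+j), c+j] @ S) (P @ [Suc (c+j), c+j, Suc (c+j)] @ S)"
    by (rule beq.bctx, rule beq.bbraid)
  moreover have "beq ((P @ [Suc (c+j)]) @ [c+j, Suc (c+j)] @ S) (([Suc (c+j)] @ P) @ [c+j, Suc (c+j)] @ S)"
    by (rule beq_appR, rule beq.bsym, rule comm1[OF fP])
  ultimately show ?thesis unfolding dec by (auto intro: beq.btrans)
qed

lemma LB: "\<forall>x\<in>set w. c < x \<and> x < c + a \<Longrightarrow> beq (pc c a @ w) (map Suc w @ pc c a)"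
proof (induction w rule: rev_induct)
  case Nil then show ?case by (simp add: beq.brefl)
next
  case (snoc x w)
  have "beq ((pc c a @ w) @ [x]) ((map Suc w @ pc c a) @ [x])" by (rule beq_appR) (use snoc in simp)
  moreover have "beq (map Suc w @ (pc c a @ [c + (x - c)])) (map Suc w @ ([Suc (c + (x - c))] @ pc c a))"
    by (rule beq_appL, rule L1) (use snoc.prems in auto)
  ultimately show ?case using snoc.prems by (auto intro: beq.btrans)
qed

lemma Lq: "1 \<le> x \<Longrightarrow> x < m \<Longrightarrow> beq ([x] @ qc 0 m) (qc 0 m @ [Suc x])"
  using beq_rev[OF L1[of x m 0]] by (simp add: qc_def)

lemma set_uw: "set (uw m) \<subseteq> {1..<m}"
  by (induction m) (auto simp: set_pc)

lemma ub: "beq (uw (Suc m)) (uw m @ qc 0 m)"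
proof (induction m)
  case 0 then show ?case by (simp add: beq.brefl)
next
  case (Suc m)
  have "uw (Suc (Suc m)) = pc 0 (Suc m) @ uw (Suc m)" by simp
  also have "beq \<dots> (pc 0 (Suc m) @ (uw m @ qc 0 m))"
    by (rule beq_appL, rule Suc.IH)
  also have "\<dots> = pc 0 m @ ([Suc m] @ uw m) @ qc 0 m" by (simp add: pc_Suc)
  also have "beq \<dots> (pc 0 m @ (uw m @ [Suc m]) @ qc 0 m)"
    by (rule beq.bctx, rule comm1) (use set_uw[of m] in \<open>auto simp: far_def\<close>)
  also have "\<dots> = uw (Suc m) @ qc 0 (Suc m)" by (simp add: qc_Suc)
  finally show ?case .
qed

lemma uc: "1 \<le> j \<Longrightarrow> j < m \<Longrightarrow> beq ([j] @ uw m) (uw m @ [m - j])"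
proof (induction m arbitrary: j)
  case 0 then show ?case by simp
next
  case (Suc m)
  show ?case
  proof (cases "j \<ge> 2")
    case True
    have "[j] @ uw (Suc m) = ([j] @ pc 0 m) @ uw m" by simp
    also have "beq \<dots> ((pc 0 m @ [j-1]) @ uw m)"
      by (rule beq_appR, rule beq.bsym) (use L1[of "j-1" m 0] True Suc.prems in simp)
    also have "\<dots> = pc 0 m @ ([j-1] @ uw m)" by simp
    also have "beq \<dots> (pc 0 m @ (uw m @ [m - (j-1)]))"
      by (rule beq_appL, rule Suc.IH) (use Suc True in auto)
    also have "\<dots> = uw (Suc m) @ [Suc m - j]" using True Suc.prems by simp
    finally show ?thesis .
  next
    case False
    then have j1: "j = 1" using Suc.prems by simp
    show ?thesis
    proof (cases "m = 1")
      case True then show ?thesis using j1 by (simp add: beq.brefl pc_def)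
    next
      case False
      then have m2: "m \<ge> 2" using Suc.prems j1 by simp
      have "beq ([1] @ uw (Suc m)) ([1] @ (uw m @ qc 0 m))" by (rule beq_appL, rule ub)
      also have "\<dots> = ([1] @ uw m) @ qc 0 m" by simp
      also have "beq \<dots> ((uw m @ [m - 1]) @ qc 0 m)"
        by (rule beq_appR, rule Suc.IH) (use m2 in auto)
      also have "\<dots> = uw m @ ([m - 1] @ qc 0 m)" by simp
      also have "beq \<dots> (uw m @ (qc 0 m @ [Suc (m-1)]))"
        by (rule beq_appL, rule Lq) (use m2 in auto)
      also have "\<dots> = (uw m @ qc 0 m) @ [m]" using m2 by simp
      also have "beq \<dots> (uw (Suc m) @ [m])"
        by (rule beq_appR, rule beq.bsym, rule ub)
      finally show ?thesis using j1 by simp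
    qed
  qed
qed

lemma ucw: "\<forall>x\<in>set w. 1 \<le> x \<and> x < m \<Longrightarrow> beq (w @ uw m) (uw m @ map (\<lambda>x. m - x) w)"
proof (induction w rule: rev_induct)
  case Nil then show ?case by (simp add: beq.brefl)
next
  case (snoc x w)
  have "(w @ [x]) @ uw m = w @ ([x] @ uw m)" by simp
  also have "beq \<dots> (w @ (uw m @ [m - x]))" by (rule beq_appL, rule uc) (use snoc.prems in auto)
  also have "\<dots> = (w @ uw m) @ [m - x]" by simp
  also have "beq \<dots> ((uw m @ map (\<lambda>x. m - x) w) @ [m - x])"
    by (rule beq_appR, rule snoc.IH) (use snoc.prems in auto)
  also have "\<dots> = uw m @ map (\<lambda>x. m - x) (w @ [x])" by simp
  finally show ?case .
qed

lemma map_qc: "map (\<lambda>x. Suc k - x) (qc 0 k) = pc 0 k"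
  unfolding qc_def pc_def by (rule nth_equalityI) (auto simp del: upt_Suc simp add: rev_nth)

lemma jw_Suc: "jw (Suc k) = qc 0 k @ pc 0 k"
  by (induction k) (auto simp: qc_Suc pc_Suc)

lemma JJ_Suc: "JJ (Suc k) = JJ k @ jw (Suc k)"
  by (simp add: JJ_def)

lemma JJ_0: "JJ 0 = []" by (simp add: JJ_def)

lemma F_twist: "beq (uw k @ uw k) (JJ k)"
proof (induction k)
  case 0 then show ?case by (simp add: JJ_0 beq.brefl)
next
  case (Suc k)
  have "beq (uw (Suc k) @ uw (Suc k)) ((uw k @ qc 0 k) @ uw (Suc k))" by (rule beq_appR, rule ub)
  also have "\<dots> = uw k @ (qc 0 k @ uw (Suc k))" by simp
  also have "beq \<dots> (uw k @ (uw (Suc k) @ pc 0 k))"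
    by (rule beq_appL) (use ucw[of "qc 0 k" "Suc k"] in \<open>auto simp: set_qc map_qc\<close>)
  also have "beq \<dots> (uw k @ (uw k @ qc 0 k) @ pc 0 k)"
    by (rule beq_appL, rule beq_appR, rule ub)
  also have "\<dots> = (uw k @ uw k) @ jw (Suc k)" by (simp add: jw_Suc)
  also have "beq \<dots> (JJ k @ jw (Suc k))"
    by (rule beq_appR, rule Suc.IH)
  also have "\<dots> = JJ (Suc k)" by (simp add: JJ_Suc)
  finally show ?case .
qed

lemma pw_Suc: "pw w (Suc j) = pw w j @ w"
  by (simp add: pw_def replicate_append_same[symmetric])
lemma pw_0[simp]: "pw w 0 = []" by (simp add: pw_def)
lemma set_pw: "set (pw w j) \<subseteq> set w" by (auto simp: pw_def)
lemma map_pw: "map f (pw w j) = pw (map f w) j" by (simp add: pw_def map_concat)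

lemma S_step:
  assumes "1 \<le> j" "Suc j \<le> k"
  shows "beq (qc (k-j) j @ pc 0 k) (pc 0 (k-1) @ qc (k-j-1) (Suc j))"
proof -
  obtain j' where j': "j = Suc j'" using assms by (cases j) auto
  obtain k' where k': "k = Suc (Suc k')" using assms by (cases k; cases "k-1") auto
  have q1: "qc (k-j) j = [k] @ qc (k-j) j'" using assms j' k' by (simp add: qc_Suc)
  have p1: "pc 0 k = pc 0 (k-1) @ [k]" using k' by (simp add: pc_Suc)
  have e: "Suc (k-j-1) = k-j" using assms by simp
  have q2: "qc (k-j) j' = map Suc (qc (k-j-1) j')" by (simp only: map_Suc_qc e)
  have step1: "beq (pc 0 (k-1) @ qc (k-j-1) j') (qc (k-j) j' @ pc 0 (k-1))"
    unfolding q2 by (rule LB) (use assms j' in \<open>auto simp: set_qc\<close>)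
  have step2: "beq (qc (k-j-1) j' @ [k]) ([k] @ qc (k-j-1) j')"
    by (rule beq.bsym, rule comm1) (use assms j' in \<open>auto simp: set_qc far_def\<close>)
  have p2: "pc 0 (k-1) = pc 0 (k-2) @ [k-1]" using k' by (simp add: pc_Suc)
  have step3: "beq ([k] @ pc 0 (k-2)) (pc 0 (k-2) @ [k])"
    by (rule comm1) (use k' in \<open>auto simp: set_pc far_def\<close>)
  have step4: "beq [k, k-1, k] [k-1, k, k-1]"
    using beq.bbraid[of "k-1"] k' by (simp add: beq.bsym)
  have q3: "qc (k-j-1) (Suc j) = [k, k-1] @ qc (k-j-1) j'" using assms j' k' by (simp add: qc_Suc)
  have "qc (k-j) j @ pc 0 k = [k] @ (qc (k-j) j' @ pc 0 (k-1)) @ [k]" by (simp add: q1 p1)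
  also have "beq \<dots> ([k] @ (pc 0 (k-1) @ qc (k-j-1) j') @ [k])"
    by (rule beq.bctx, rule beq.bsym, rule step1)
  also have "[k] @ (pc 0 (k-1) @ qc (k-j-1) j') @ [k] = ([k] @ pc 0 (k-1)) @ (qc (k-j-1) j' @ [k])" by simp
  also have "beq \<dots> (([k] @ pc 0 (k-1)) @ ([k] @ qc (k-j-1) j'))" by (rule beq_appL, rule step2)
  also have "\<dots> = (([k] @ pc 0 (k-2)) @ [k-1, k]) @ qc (k-j-1) j'" unfolding p2 by simp
  also have "beq \<dots> (((pc 0 (k-2) @ [k]) @ [k-1, k]) @ qc (k-j-1) j')"
    by (rule beq_appR, rule beq_appR, rule step3)
  also have "\<dots> = pc 0 (k-2) @ [k, k-1, k] @ qc (k-j-1) j'" by simp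
  also have "beq \<dots> (pc 0 (k-2) @ [k-1, k, k-1] @ qc (k-j-1) j')" by (rule beq.bctx, rule step4)
  also have "\<dots> = pc 0 (k-1) @ qc (k-j-1) (Suc j)" unfolding q3 p2 by simp
  finally show ?thesis .
qed

lemma F1a: "1 \<le> j \<Longrightarrow> j \<le> k \<Longrightarrow> beq (pw (pc 0 k) j) (pw (pc 0 (k-1)) j @ qc (k-j) j)"
proof (induction j rule: nat_induct_at_least)
  case base
  then show ?case by (cases k) (auto simp: pw_def pc_Suc qc_Suc beq.brefl)
next
  case (Suc j)
  have "pw (pc 0 k) (Suc j) = pw (pc 0 k) j @ pc 0 k" by (simp add: pw_Suc)
  also have "beq \<dots> ((pw (pc 0 (k-1)) j @ qc (k-j) j) @ pc 0 k)"
    by (rule beq_appR, rule Suc.IH) (use Suc in auto)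
  also have "\<dots> = pw (pc 0 (k-1)) j @ (qc (k-j) j @ pc 0 k)" by simp
  also have "beq \<dots> (pw (pc 0 (k-1)) j @ (pc 0 (k-1) @ qc (k-j-1) (Suc j)))"
    by (rule beq_appL, rule S_step) (use Suc in auto)
  also have "\<dots> = pw (pc 0 (k-1)) (Suc j) @ qc (k - Suc j) (Suc j)" by (simp add: pw_Suc)
  finally show ?case .
qed

lemma F2: "beq (pw (pc 0 (i-1)) i) (JJ i)"
proof (induction i)
  case 0 then show ?case by (simp add: JJ_0 beq.brefl)
next
  case (Suc k)
  show ?case
  proof (cases "k = 0")
    case True then show ?thesis by (simp add: JJ_def pw_def beq.brefl)
  next
    case False
    have "pw (pc 0 (Suc k - 1)) (Suc k) = pw (pc 0 k) k @ pc 0 k" by (simp add: pw_Suc)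
    also have "beq \<dots> ((pw (pc 0 (k-1)) k @ qc 0 k) @ pc 0 k)"
      by (rule beq_appR) (use F1a[of k k] False in auto)
    also have "\<dots> = pw (pc 0 (k-1)) k @ jw (Suc k)" by (simp add: jw_Suc)
    also have "beq \<dots> (JJ k @ jw (Suc k))"
      by (rule beq_appR) (use Suc.IH in simp)
    also have "\<dots> = JJ (Suc k)" by (simp add: JJ_Suc)
    finally show ?thesis .
  qed
qed

lemma set_om: "set (om a c) \<subseteq> {1..<a+c}"
  by (induction c) (auto simp: set_pc)

lemma Dec: "beq (uw (b + a)) (uw b @ om a b @ uw a)"
proof (induction b)
  case 0 then show ?case by (simp add: beq.brefl)
next
  case (Suc b)
  have "uw (Suc b + a) = (pc 0 b @ pc b a) @ uw (b + a)" using pc_split[of b "b+a" 0] by simp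
  also have "beq \<dots> ((pc 0 b @ pc b a) @ (uw b @ om a b @ uw a))"
    by (rule beq_appL, rule Suc.IH)
  also have "\<dots> = pc 0 b @ (pc b a @ uw b) @ (om a b @ uw a)" by simp
  also have "beq \<dots> (pc 0 b @ (uw b @ pc b a) @ (om a b @ uw a))"
    by (rule beq.bctx, rule commw) (use set_uw[of b] in \<open>auto simp: set_pc far_def\<close>)
  also have "\<dots> = uw (Suc b) @ om a (Suc b) @ uw a" by simp
  finally show ?case .
qed

lemma Kword: "beq (pw (pc (Suc c) (a-1)) j @ pc c a) (pc c a @ pw (pc c (a-1)) j)"
proof -
  have "beq (pc c a @ pw (pc c (a-1)) j) (map Suc (pw (pc c (a-1)) j) @ pc c a)"
    by (rule LB) (use set_pw[of "pc c (a-1)" j] in \<open>cases a; auto simp: set_pc\<close>)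
  then show ?thesis by (simp add: map_pw map_Suc_pc beq.bsym)
qed

lemma set_jw: "set (jw k) \<subseteq> {1..<k}"
  by (cases k) (auto simp: jw_Suc set_qc set_pc)
lemma set_JJ: "set (JJ k) \<subseteq> {1..<k}"
  using set_jw by (fastforce simp: JJ_def)

definition G :: "nat \<Rightarrow> nat \<Rightarrow> op \<Rightarrow> nat list \<Rightarrow> op" where
  "G n m R w = nm n m (op_prod n m (map (Rk R) w))"

lemma G_Nil: "G n m R [] = nm n m op_id" by (simp add: G_def)

lemma G_Cons: "G n m R (k # w) = M n m (Rk R k) (G n m R w)"
  by (simp add: G_def M_def[symmetric])

lemma G_append: "G n m R (u @ v) = M n m (G n m R u) (G n m R v)"
proof (induction u)
  case Nil
  have "G n m R v = nm n m (G n m R v)" by (simp add: G_def)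
  then show ?case by (simp add: G_Nil)
next
  case (Cons k u)
  then show ?case by (simp add: G_Cons M_assoc)
qed

lemma G_single: "G n m R [k] = nm n m (Rk R k)"
  by (simp add: G_Cons G_Nil)

lemma nm_G[simp]: "nm n m (G n m R w) = G n m R w" by (simp add: G_def)

lemma drop_eq_nth: "length x = length y \<Longrightarrow> (drop p x = drop p y) = (\<forall>j. p \<le> j \<and> j < length x \<longrightarrow> x!j = y!j)"
proof
  assume l: "length x = length y" and d: "drop p x = drop p y"
  show "\<forall>j. p \<le> j \<and> j < length x \<longrightarrow> x!j = y!j"
  proof (intro allI impI)
    fix j assume j: "p \<le> j \<and> j < length x"
    have "drop p x ! (j - p) = drop p y ! (j - p)" using d by simp
    then show "x!j = y!j" using j l by simp
  qed
next
  assume l: "length x = length y" and h: "\<forall>j. p \<le> j \<and> j < length x \<longrightarrow> x!j = y!j"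
  show "drop p x = drop p y"
    by (rule nth_equalityI) (use l h in auto)
qed

lemma take_eq_nth: "length x = length y \<Longrightarrow> p \<le> length x \<Longrightarrow> (take p x = take p y) = (\<forall>j<p. x!j = y!j)"
proof
  assume l: "length x = length y" "p \<le> length x" and d: "take p x = take p y"
  show "\<forall>j<p. x!j = y!j"
  proof (intro allI impI)
    fix j assume j: "j < p"
    have "take p x ! j = take p y ! j" using d by simp
    then show "x!j = y!j" using j by simp
  qed
next
  assume l: "length x = length y" "p \<le> length x" and h: "\<forall>j<p. x!j = y!j"
  show "take p x = take p y"
    by (rule nth_equalityI) (use l h in auto)
qed

lemma RkR:
  assumes k: "1 \<le> k" "Suc k \<le> p"
  shows "nm n (p+q) (Rk R k) = nm n (p+q) (tens p (Rk R k) op_id)"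
proof (rule ext, rule ext)
  fix x y
  show "nm n (p+q) (Rk R k) x y = nm n (p+q) (tens p (Rk R k) op_id) x y"
  proof (cases "x \<in> idx n (p+q) \<and> y \<in> idx n (p+q)")
    case True
    then have l: "length x = p + q" "length y = p + q" by (auto simp: idx_len)
    have c: "(\<forall>j<p+q. j \<noteq> k - 1 \<and> j \<noteq> k \<longrightarrow> x!j = y!j) =
          ((\<forall>j<p. j \<noteq> k - 1 \<and> j \<noteq> k \<longrightarrow> x!j = y!j) \<and> (\<forall>j. p \<le> j \<and> j < p+q \<longrightarrow> x!j = y!j))"
      using k by (auto; metis not_le)
    have "Rk R k x y = tens p (Rk R k) op_id x y"
      unfolding Rk_def emb2_def tens_def op_id_def
      using k l c drop_eq_nth[of x y p] by (auto simp: min_def)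
    then show ?thesis using True by (simp add: nm_def)
  next
    case False then show ?thesis unfolding nm_def[of n "p+q"] by (simp only: if_False)
  qed
qed

lemma RkL:
  assumes k: "1 \<le> k" "Suc k \<le> q"
  shows "nm n (j+q) (Rk R (j+k)) = nm n (j+q) (tens j op_id (Rk R k))"
proof (rule ext, rule ext)
  fix x y
  show "nm n (j+q) (Rk R (j+k)) x y = nm n (j+q) (tens j op_id (Rk R k)) x y"
  proof (cases "x \<in> idx n (j+q) \<and> y \<in> idx n (j+q)")
    case True
    then have l: "length x = j + q" "length y = j + q" by (auto simp: idx_len)
    have c: "(\<forall>i<j+q. i \<noteq> j + k - 1 \<and> i \<noteq> j + k \<longrightarrow> x!i = y!i) =
          ((\<forall>i<j. x!i = y!i) \<and> (\<forall>i<q. i \<noteq> k - 1 \<and> i \<noteq> k \<longrightarrow> x!(j+i) = y!(j+i)))"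
    proof
      assume h: "\<forall>i<j+q. i \<noteq> j + k - 1 \<and> i \<noteq> j + k \<longrightarrow> x!i = y!i"
      show "(\<forall>i<j. x!i = y!i) \<and> (\<forall>i<q. i \<noteq> k - 1 \<and> i \<noteq> k \<longrightarrow> x!(j+i) = y!(j+i))"
        using h k by auto
    next
      assume h: "(\<forall>i<j. x!i = y!i) \<and> (\<forall>i<q. i \<noteq> k - 1 \<and> i \<noteq> k \<longrightarrow> x!(j+i) = y!(j+i))"
      show "\<forall>i<j+q. i \<noteq> j + k - 1 \<and> i \<noteq> j + k \<longrightarrow> x!i = y!i"
      proof (intro allI impI)
        fix i assume i: "i < j + q" "i \<noteq> j + k - 1 \<and> i \<noteq> j + k"
        show "x!i = y!i"
        proof (cases "i < j")
          case True then show ?thesis using h by simp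
        next
          case False
          then obtain t where t: "i = j + t" by (metis le_Suc_ex not_less)
          then show ?thesis using h i k by auto
        qed
      qed
    qed
    have e1: "j + k - 1 = j + (k - 1)" using k by simp
    have "Rk R (j+k) x y = tens j op_id (Rk R k) x y"
      unfolding Rk_def emb2_def tens_def op_id_def
      using k l c take_eq_nth[of x y j] e1 by (auto simp: nth_drop)
    then show ?thesis using True by (simp add: nm_def)
  next
    case False then show ?thesis unfolding nm_def[of n "j+q"] by (simp only: if_False)
  qed
qed

lemma M_tens3: "M n (p+q) (tens p A B) (M n (p+q) (tens p C D) (tens p E F)) =
   nm n (p+q) (tens p (M n p A (M n p C E)) (M n q B (M n q D F)))"
proof -
  have "M n (p+q) (tens p A B) (M n (p+q) (tens p C D) (tens p E F)) =
        M n (p+q) (tens p A B) (nm n (p+q) (tens p (M n p C E) (M n q D F)))" by (simp only: M_tens)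
  also have "\<dots> = M n (p+q) (tens p A B) (tens p (M n p C E) (M n q D F))" by (rule M_nm_right)
  also have "\<dots> = nm n (p+q) (tens p (M n p A (M n p C E)) (M n q B (M n q D F)))" by (rule M_tens)
  finally show ?thesis .
qed

lemma G3: "G n m R [a, b, c] = M n m (Rk R a) (M n m (Rk R b) (Rk R c))"
  by (simp add: G_Cons G_Nil)

lemma G2: "G n m R [a, b] = M n m (Rk R a) (Rk R b)"
  by (simp add: G_Cons G_Nil)

lemma M3_cong: "nm n m A = nm n m A' \<Longrightarrow> nm n m B = nm n m B' \<Longrightarrow> nm n m C = nm n m C' \<Longrightarrow>
   M n m A (M n m B C) = M n m A' (M n m B' C')"
  by (metis nm_M_cong)

lemma G_braid:
  assumes bh: "M n 3 (Rk R 1) (M n 3 (Rk R 2) (Rk R 1)) = M n 3 (Rk R 2) (M n 3 (Rk R 1) (Rk R 2))"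
    and k: "1 \<le> k" "Suc (Suc k) \<le> m"
  shows "G n m R [k, Suc k, k] = G n m R [Suc k, k, Suc k]"
proof -
  define j where "j = k - 1"
  define L where "L = m - j"
  have mj: "m = j + L" using k by (simp add: j_def L_def)
  have L3: "L = 3 + (L - 3)" using k by (simp add: j_def L_def)
  have kj: "k = j + 1" "Suc k = j + 2" using k by (simp_all add: j_def)
  define X1 where "X1 = tens j op_id (tens 3 (Rk R 1) op_id)"
  define X2 where "X2 = tens j op_id (tens 3 (Rk R 2) op_id)"
  have hL: "3 \<le> L" using k by (simp add: j_def L_def)
  have "nm n (3 + (L-3)) (Rk R 1) = nm n (3 + (L-3)) (tens 3 (Rk R 1) op_id)"
    by (rule RkR) simp_all
  then have a1: "nm n L (Rk R 1) = nm n L (tens 3 (Rk R 1) op_id)"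
    by (simp only: L3[symmetric])
  have "nm n (3 + (L-3)) (Rk R 2) = nm n (3 + (L-3)) (tens 3 (Rk R 2) op_id)"
    by (rule RkR) simp_all
  then have a2: "nm n L (Rk R 2) = nm n L (tens 3 (Rk R 2) op_id)"
    by (simp only: L3[symmetric])
  have b1: "nm n (j+L) (Rk R (j+1)) = nm n (j+L) (tens j op_id (Rk R 1))"
    by (rule RkL) (use hL in simp_all)
  have b2: "nm n (j+L) (Rk R (j+2)) = nm n (j+L) (tens j op_id (Rk R 2))"
    by (rule RkL) (use hL in simp_all)
  have c1: "nm n m (Rk R k) = nm n m X1"
    unfolding X1_def mj kj(1) by (rule HOL.trans[OF b1 nm_tens_cong[OF HOL.refl a1]])
  have c2: "nm n m (Rk R (Suc k)) = nm n m X2"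
    unfolding X2_def mj kj(2) by (rule HOL.trans[OF b2 nm_tens_cong[OF HOL.refl a2]])
  have in1: "M n L (tens 3 (Rk R 1) op_id) (M n L (tens 3 (Rk R 2) op_id) (tens 3 (Rk R 1) op_id)) =
        nm n L (tens 3 (M n 3 (Rk R 1) (M n 3 (Rk R 2) (Rk R 1))) (M n (L-3) op_id (M n (L-3) op_id op_id)))"
    using M_tens3[of n 3 "L-3" "Rk R 1" op_id "Rk R 2" op_id "Rk R 1" op_id] by (simp only: L3[symmetric])
  have in2: "M n L (tens 3 (Rk R 2) op_id) (M n L (tens 3 (Rk R 1) op_id) (tens 3 (Rk R 2) op_id)) =
        nm n L (tens 3 (M n 3 (Rk R 2) (M n 3 (Rk R 1) (Rk R 2))) (M n (L-3) op_id (M n (L-3) op_id op_id)))"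
    using M_tens3[of n 3 "L-3" "Rk R 2" op_id "Rk R 1" op_id "Rk R 2" op_id] by (simp only: L3[symmetric])
  have inner: "M n L (tens 3 (Rk R 1) op_id) (M n L (tens 3 (Rk R 2) op_id) (tens 3 (Rk R 1) op_id)) =
        M n L (tens 3 (Rk R 2) op_id) (M n L (tens 3 (Rk R 1) op_id) (tens 3 (Rk R 2) op_id))"
    unfolding in1 in2 bh ..
  have "G n m R [k, Suc k, k] = M n m X1 (M n m X2 X1)"
    unfolding G3 by (rule M3_cong[OF c1 c2 c1])
  also have "\<dots> = nm n m (tens j (M n j op_id (M n j op_id op_id))
      (M n L (tens 3 (Rk R 1) op_id) (M n L (tens 3 (Rk R 2) op_id) (tens 3 (Rk R 1) op_id))))"
    unfolding X1_def X2_def mj by (rule M_tens3)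
  also have "\<dots> = nm n m (tens j (M n j op_id (M n j op_id op_id))
      (M n L (tens 3 (Rk R 2) op_id) (M n L (tens 3 (Rk R 1) op_id) (tens 3 (Rk R 2) op_id))))"
    unfolding inner ..
  also have "\<dots> = M n m X2 (M n m X1 X2)"
    unfolding X1_def X2_def mj by (rule M_tens3[symmetric])
  also have "\<dots> = G n m R [Suc k, k, Suc k]"
    unfolding G3 by (rule M3_cong[OF c2 c1 c2, symmetric])
  finally show ?thesis .
qed

lemma G_comm:
  assumes k: "1 \<le> k" "Suc k < l" "Suc l \<le> m"
  shows "G n m R [k, l] = G n m R [l, k]"
proof -
  define p where "p = Suc k"
  define q where "q = m - p"
  have mpq: "m = p + q" using k by (simp add: p_def q_def)
  have lp: "l = p + (l - p)" using k by (simp add: p_def)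
  have a1: "nm n m (Rk R k) = nm n m (tens p (Rk R k) op_id)"
    unfolding mpq by (rule RkR) (use k in \<open>auto simp: p_def\<close>)
  have "nm n (p+q) (Rk R (p + (l-p))) = nm n (p+q) (tens p op_id (Rk R (l - p)))"
    by (rule RkL) (use k in \<open>simp_all add: p_def q_def\<close>)
  then have a2: "nm n m (Rk R l) = nm n m (tens p op_id (Rk R (l - p)))"
    by (simp only: lp[symmetric] mpq[symmetric])
  have "G n m R [k, l] = M n m (tens p (Rk R k) op_id) (tens p op_id (Rk R (l - p)))"
    unfolding G2 by (rule nm_M_cong[OF a1 a2])
  also have "\<dots> = nm n m (tens p (M n p (Rk R k) op_id) (M n q op_id (Rk R (l - p))))"
    unfolding mpq by (rule M_tens)
  also have "\<dots> = nm n m (tens p (M n p op_id (Rk R k)) (M n q (Rk R (l - p)) op_id))"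
    by simp
  also have "\<dots> = M n m (tens p op_id (Rk R (l - p))) (tens p (Rk R k) op_id)"
    unfolding mpq by (rule M_tens[symmetric])
  also have "\<dots> = G n m R [l, k]"
    unfolding G2 by (rule nm_M_cong[OF a2 a1, symmetric])
  finally show ?thesis .
qed

lemma G_beq:
  assumes bh: "M n 3 (Rk R 1) (M n 3 (Rk R 2) (Rk R 1)) = M n 3 (Rk R 2) (M n 3 (Rk R 1) (Rk R 2))"
  shows "beq u v \<Longrightarrow> set u \<subseteq> {1..<m} \<Longrightarrow> G n m R u = G n m R v"
proof (induction rule: beq.induct)
  case (brefl w) then show ?case by simp
next
  case (bsym u v) then show ?case using beq_set by (metis)
next
  case (btrans u v w) then show ?case using beq_set by (metis)
next
  case (bctx u v p s) then show ?case by (simp add: G_append)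
next
  case (bbraid k) then show ?case using G_braid[OF bh, of k m] by auto
next
  case (bcomm k l) then show ?case using G_comm[of k l m n R] by auto
qed

lemma sum_split1: "(\<Sum>z\<in>idx n (Suc p). f z) = (\<Sum>u\<in>idx n p. \<Sum>c<n. f (u @ [c]))"
  using sum_idx_split[where n=n and p=p and q="Suc 0" and f=f] by (simp add: sum_idx_1)

lemma emb1_last:
  assumes "length x = p" "length u = p"
  shows "emb1 (Suc p) D (x @ [a]) (u @ [c]) = (if x = u then D [a] [c] else 0)"
proof -
  have "(\<forall>j<length (x @ [a]). j \<noteq> Suc p - 1 \<longrightarrow> (x @ [a]) ! j = (u @ [c]) ! j) = (x = u)"
  proof
    assume h: "\<forall>j<length (x @ [a]). j \<noteq> Suc p - 1 \<longrightarrow> (x @ [a]) ! j = (u @ [c]) ! j"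
    show "x = u"
    proof (rule nth_equalityI)
      show "length x = length u" using assms by simp
      fix j assume "j < length x"
      then show "x ! j = u ! j" using h[rule_format, of j] assms by (simp add: nth_append)
    qed
  next
    assume "x = u" then show "\<forall>j<length (x @ [a]). j \<noteq> Suc p - 1 \<longrightarrow> (x @ [a]) ! j = (u @ [c]) ! j"
      using assms by (auto simp: nth_append)
  qed
  then show ?thesis unfolding emb1_def using assms by (simp add: nth_append)
qed

lemma rtr_formula:
  assumes x: "x \<in> idx n p" and y: "y \<in> idx n p"
  shows "rtr n (Suc p) D (Suc p) Y x y = (\<Sum>a<n. \<Sum>c<n. D [a] [c] * Y (x @ [c]) (y @ [a]))"
proof -
  have lx: "length x = p" and ly: "length y = p" using x y by (auto simp: idx_len)
  have "rtr n (Suc p) D (Suc p) Y x y = (\<Sum>a<n. op_mult n (Suc p) (emb1 (Suc p) D) Y (x @ [a]) (y @ [a]))"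
    unfolding rtr_def ptr_def using lx ly by simp
  also have "\<dots> = (\<Sum>a<n. \<Sum>u\<in>idx n p. \<Sum>c<n. emb1 (Suc p) D (x @ [a]) (u @ [c]) * Y (u @ [c]) (y @ [a]))"
    unfolding op_mult_def sum_split1 ..
  also have "\<dots> = (\<Sum>a<n. \<Sum>u\<in>idx n p. \<Sum>c<n. if x = u then D [a] [c] * Y (u @ [c]) (y @ [a]) else 0)"
    by (intro sum.cong HOL.refl) (simp add: emb1_last lx idx_len)
  also have "\<dots> = (\<Sum>a<n. \<Sum>u\<in>idx n p. if x = u then (\<Sum>c<n. D [a] [c] * Y (u @ [c]) (y @ [a])) else 0)"
    by (intro sum.cong HOL.refl) simp
  also have "\<dots> = (\<Sum>a<n. \<Sum>c<n. D [a] [c] * Y (x @ [c]) (y @ [a]))"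
    using x by (simp add: finite_idx)
  finally show ?thesis .
qed

definition Tr :: "nat \<Rightarrow> nat \<Rightarrow> op \<Rightarrow> op \<Rightarrow> op" where
  "Tr n p D Y = nm n p (rtr n (Suc p) D (Suc p) Y)"

lemma idx_snoc: "x \<in> idx n p \<Longrightarrow> c < n \<Longrightarrow> x @ [c] \<in> idx n (Suc p)"
  by (auto simp: idx_def)

lemma Tr_nm[simp]: "Tr n p D (nm n (Suc p) Y) = Tr n p D Y"
  unfolding Tr_def nm_def[of n p]
  by (auto simp: fun_eq_iff rtr_formula nm_def idx_snoc intro!: sum.cong)

lemma Tr_M: "Tr n p D (M n (Suc p) A B) = Tr n p D (op_mult n (Suc p) A B)"
  unfolding M_def by simp

lemma nm_Tr[simp]: "nm n p (Tr n p D Y) = Tr n p D Y" by (simp add: Tr_def)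

lemma CL:
  assumes "length x = p" "c < n"
  shows "(\<Sum>z\<in>idx n (Suc p). tens p A op_id (x @ [c]) z * F z) = (\<Sum>u\<in>idx n p. A x u * F (u @ [c]))"
proof -
  have "(\<Sum>z\<in>idx n (Suc p). tens p A op_id (x @ [c]) z * F z) =
        (\<Sum>u\<in>idx n p. \<Sum>e<n. tens p A op_id (x @ [c]) (u @ [e]) * F (u @ [e]))" by (rule sum_split1)
  also have "\<dots> = (\<Sum>u\<in>idx n p. \<Sum>e<n. if c = e then A x u * F (u @ [c]) else 0)"
    by (intro sum.cong HOL.refl) (auto simp: tens_def op_id_def assms idx_len)
  also have "\<dots> = (\<Sum>u\<in>idx n p. A x u * F (u @ [c]))" using assms by simp
  finally show ?thesis .
qed

lemma CR:
  assumes "length y = p" "a < n"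
  shows "(\<Sum>w\<in>idx n (Suc p). F w * tens p B op_id w (y @ [a])) = (\<Sum>v\<in>idx n p. F (v @ [a]) * B v y)"
proof -
  have "(\<Sum>w\<in>idx n (Suc p). F w * tens p B op_id w (y @ [a])) =
        (\<Sum>v\<in>idx n p. \<Sum>e<n. F (v @ [e]) * tens p B op_id (v @ [e]) (y @ [a]))" by (rule sum_split1)
  also have "\<dots> = (\<Sum>v\<in>idx n p. \<Sum>e<n. if e = a then F (v @ [a]) * B v y else 0)"
    by (intro sum.cong HOL.refl) (auto simp: tens_def op_id_def assms idx_len)
  also have "\<dots> = (\<Sum>v\<in>idx n p. F (v @ [a]) * B v y)" using assms by simp
  finally show ?thesis .
qed

lemma Tr_left: "Tr n p D (op_mult n (Suc p) (tens p A op_id) Y) = M n p A (Tr n p D Y)"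
proof (rule ext, rule ext)
  fix x y
  show "Tr n p D (op_mult n (Suc p) (tens p A op_id) Y) x y = M n p A (Tr n p D Y) x y"
  proof (cases "x \<in> idx n p \<and> y \<in> idx n p")
    case True
    then have lx: "length x = p" by (auto simp: idx_len)
    have "Tr n p D (op_mult n (Suc p) (tens p A op_id) Y) x y =
      (\<Sum>a<n. \<Sum>c<n. D [a] [c] * (\<Sum>z\<in>idx n (Suc p). tens p A op_id (x @ [c]) z * Y z (y @ [a])))"
      using True by (simp add: Tr_def nm_def rtr_formula op_mult_def)
    also have "\<dots> = (\<Sum>a<n. \<Sum>c<n. D [a] [c] * (\<Sum>u\<in>idx n p. A x u * Y (u @ [c]) (y @ [a])))"
      by (intro sum.cong HOL.refl) (simp add: CL lx)
    also have "\<dots> = (\<Sum>a<n. \<Sum>c<n. \<Sum>u\<in>idx n p. A x u * (D [a] [c] * Y (u @ [c]) (y @ [a])))"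
      by (simp add: sum_distrib_left mult_ac)
    also have "\<dots> = (\<Sum>u\<in>idx n p. \<Sum>a<n. \<Sum>c<n. A x u * (D [a] [c] * Y (u @ [c]) (y @ [a])))"
      by (simp add: sum.swap[of _ "idx n p"])
    also have "\<dots> = (\<Sum>u\<in>idx n p. A x u * Tr n p D Y u y)"
      using True by (intro sum.cong HOL.refl) (simp add: Tr_def nm_def rtr_formula sum_distrib_left)
    also have "\<dots> = M n p A (Tr n p D Y) x y"
      using True by (simp add: M_def nm_def op_mult_def)
    finally show ?thesis .
  next
    case False then show ?thesis by (auto simp: Tr_def M_def nm_def)
  qed
qed

lemma Tr_right: "Tr n p D (op_mult n (Suc p) Y (tens p B op_id)) = M n p (Tr n p D Y) B"
proof (rule ext, rule ext)
  fix x y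
  show "Tr n p D (op_mult n (Suc p) Y (tens p B op_id)) x y = M n p (Tr n p D Y) B x y"
  proof (cases "x \<in> idx n p \<and> y \<in> idx n p")
    case True
    then have ly: "length y = p" by (auto simp: idx_len)
    have "Tr n p D (op_mult n (Suc p) Y (tens p B op_id)) x y =
      (\<Sum>a<n. \<Sum>c<n. D [a] [c] * (\<Sum>w\<in>idx n (Suc p). Y (x @ [c]) w * tens p B op_id w (y @ [a])))"
      using True by (simp add: Tr_def nm_def rtr_formula op_mult_def)
    also have "\<dots> = (\<Sum>a<n. \<Sum>c<n. D [a] [c] * (\<Sum>v\<in>idx n p. Y (x @ [c]) (v @ [a]) * B v y))"
      by (intro sum.cong HOL.refl) (simp add: CR ly)
    also have "\<dots> = (\<Sum>a<n. \<Sum>c<n. \<Sum>v\<in>idx n p. (D [a] [c] * Y (x @ [c]) (v @ [a])) * B v y)"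
      by (simp add: sum_distrib_left mult_ac)
    also have "\<dots> = (\<Sum>v\<in>idx n p. \<Sum>a<n. \<Sum>c<n. (D [a] [c] * Y (x @ [c]) (v @ [a])) * B v y)"
      by (simp add: sum.swap[of _ "idx n p"])
    also have "\<dots> = (\<Sum>v\<in>idx n p. Tr n p D Y x v * B v y)"
      using True by (intro sum.cong HOL.refl) (simp add: Tr_def nm_def rtr_formula sum_distrib_right)
    also have "\<dots> = M n p (Tr n p D Y) B x y"
      using True by (simp add: M_def nm_def op_mult_def)
    finally show ?thesis .
  next
    case False then show ?thesis by (auto simp: Tr_def M_def nm_def)
  qed
qed

lemma nm_tens1: "nm n (Suc p) (tens p (nm n p A) (nm n (Suc 0) B)) = nm n (Suc p) (tens p A B)"
  using nm_tens[of n p "Suc 0" A B] by simp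

lemma M_tens1: "M n (Suc p) (tens p A B) (tens p C D) = nm n (Suc p) (tens p (M n p A C) (M n (Suc 0) B D))"
  using M_tens[of n p "Suc 0" A B C D] by simp

lemma RkR1: "1 \<le> k \<Longrightarrow> k < p \<Longrightarrow> nm n (Suc p) (Rk R k) = nm n (Suc p) (tens p (Rk R k) op_id)"
  using RkR[of k p n "Suc 0" R] by simp

lemma G_ext: "set w \<subseteq> {1..<p} \<Longrightarrow> G n (Suc p) R w = nm n (Suc p) (tens p (G n p R w) op_id)"
proof (induction w)
  case Nil
  have "nm n (Suc p) (tens p (nm n p op_id) op_id) = nm n (Suc p) (tens p op_id op_id)"
    using nm_tens1[of n p op_id op_id] nm_tens1[of n p "nm n p op_id" op_id] by simp
  then show ?case by (simp add: G_Nil tens_id)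
next
  case (Cons k w)
  have k: "1 \<le> k" "k < p" using Cons.prems by auto
  have "G n (Suc p) R (k # w) = M n (Suc p) (Rk R k) (G n (Suc p) R w)" by (rule G_Cons)
  also have "\<dots> = M n (Suc p) (tens p (Rk R k) op_id) (tens p (G n p R w) op_id)"
    using Cons k by (intro nm_M_cong) (simp_all add: RkR1)
  also have "\<dots> = nm n (Suc p) (tens p (M n p (Rk R k) (G n p R w)) (M n (Suc 0) op_id op_id))"
    by (rule M_tens1)
  also have "\<dots> = nm n (Suc p) (tens p (G n p R (k # w)) op_id)"
    using nm_tens1[of n p "G n p R (k # w)" op_id] nm_tens1[of n p "G n p R (k # w)" "M n (Suc 0) op_id op_id"]
    by (simp add: G_Cons)
  finally show ?case .
qed

lemma Tr_Rk:
  assumes SK: "\<forall>u<n. \<forall>v<n. (\<Sum>a<n. \<Sum>c<n. D [a] [c] * R [u, c] [v, a]) = (if u = v then 1 else 0)"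
    and p: "1 \<le> p"
  shows "Tr n p D (Rk R p) = nm n p op_id"
proof (rule ext, rule ext)
  fix x y
  show "Tr n p D (Rk R p) x y = nm n p op_id x y"
  proof (cases "x \<in> idx n p \<and> y \<in> idx n p")
    case True
    then have lx: "length x = p" and ly: "length y = p" by (auto simp: idx_len)
    have xn: "x ! (p-1) < n" "y ! (p-1) < n" using True p by (auto simp: idx_def)
    define C where "C = (\<forall>j<Suc p. j \<noteq> p - 1 \<and> j \<noteq> Suc p - 1 \<longrightarrow> x ! j = y ! j)"
    have e: "\<And>a c. Rk R p (x @ [c]) (y @ [a]) = R [x ! (p-1), c] [y ! (p-1), a] * (if C then 1 else 0)"
      unfolding Rk_def emb2_def C_def using lx ly p by (auto simp: nth_append intro!: arg_cong[where f="\<lambda>b. _ * (if b then 1 else 0)"])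
    have "Tr n p D (Rk R p) x y = (\<Sum>a<n. \<Sum>c<n. D [a] [c] * R [x ! (p-1), c] [y ! (p-1), a]) * (if C then 1 else 0)"
      using True by (simp add: Tr_def nm_def rtr_formula e sum_distrib_right mult_ac)
    also have "\<dots> = (if x ! (p-1) = y ! (p-1) \<and> C then 1 else 0)" using SK xn by simp
    also have "(x ! (p-1) = y ! (p-1) \<and> C) = (x = y)"
    proof
      assume h: "x ! (p-1) = y ! (p-1) \<and> C"
      show "x = y"
      proof (rule nth_equalityI)
        show "length x = length y" using lx ly by simp
        fix j assume "j < length x"
        then show "x ! j = y ! j" using h lx unfolding C_def by (cases "j = p - 1") auto
      qed
    next
      assume "x = y" then show "x ! (p-1) = y ! (p-1) \<and> C" by (simp add: C_def)
    qed
    finally show ?thesis using True by (simp add: nm_def op_id_def)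
  next
    case False then show ?thesis by (auto simp: Tr_def nm_def)
  qed
qed

lemma Tr_step:
  assumes SK: "\<forall>u<n. \<forall>v<n. (\<Sum>a<n. \<Sum>c<n. D [a] [c] * R [u, c] [v, a]) = (if u = v then 1 else 0)"
    and p: "1 \<le> p" and w: "set w1 \<subseteq> {1..<p}" "set w2 \<subseteq> {1..<p}"
  shows "Tr n p D (G n (Suc p) R (w1 @ [p] @ w2)) = G n p R (w1 @ w2)"
proof -
  have "G n (Suc p) R (w1 @ [p] @ w2) =
     M n (Suc p) (tens p (G n p R w1) op_id) (M n (Suc p) (Rk R p) (tens p (G n p R w2) op_id))"
    unfolding G_append G_single using G_ext[OF w(1)] G_ext[OF w(2)] by (metis M_nm_left M_nm_right)
  then have "Tr n p D (G n (Suc p) R (w1 @ [p] @ w2)) =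
     M n p (G n p R w1) (Tr n p D (M n (Suc p) (Rk R p) (tens p (G n p R w2) op_id)))"
    by (simp add: Tr_M Tr_left)
  also have "\<dots> = M n p (G n p R w1) (M n p (Tr n p D (Rk R p)) (G n p R w2))"
    by (simp add: Tr_M Tr_right)
  also have "\<dots> = G n p R (w1 @ w2)"
    using Tr_Rk[OF SK p] by (simp add: G_append)
  finally show ?thesis .
qed

lemma rtr_last_Suc: "rtr_last n (Suc p) D (Suc j) Y = rtr_last n p D j (rtr n (Suc p) D (Suc p) Y)"
  by simp

lemma RL_nm: "nm n q (rtr_last n (q+j) D j (nm n (q+j) Y)) = nm n q (rtr_last n (q+j) D j Y)"
proof (induction j arbitrary: Y)
  case 0 then show ?case by simp
next
  case (Suc j)
  have "nm n q (rtr_last n (q + Suc j) D (Suc j) (nm n (q + Suc j) Y)) =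
        nm n q (rtr_last n (q+j) D j (rtr n (Suc (q+j)) D (Suc (q+j)) (nm n (Suc (q+j)) Y)))" by simp
  also have "\<dots> = nm n q (rtr_last n (q+j) D j (Tr n (q+j) D (nm n (Suc (q+j)) Y)))"
    unfolding Tr_def Suc.IH ..
  also have "\<dots> = nm n q (rtr_last n (q+j) D j (Tr n (q+j) D Y))" by simp
  also have "\<dots> = nm n q (rtr_last n (q+j) D j (rtr n (Suc (q+j)) D (Suc (q+j)) Y))"
    unfolding Tr_def Suc.IH ..
  also have "\<dots> = nm n q (rtr_last n (q + Suc j) D (Suc j) Y)" by simp
  finally show ?case .
qed

lemma Tr_mod2:
  assumes w: "set w1 \<subseteq> {1..<p}" "set w2 \<subseteq> {1..<p}"
  shows "Tr n p D (M n (Suc p) (G n (Suc p) R w1) (M n (Suc p) Y (G n (Suc p) R w2))) =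
         M n p (G n p R w1) (M n p (Tr n p D Y) (G n p R w2))"
proof -
  have "M n (Suc p) (G n (Suc p) R w1) (M n (Suc p) Y (G n (Suc p) R w2)) =
        M n (Suc p) (tens p (G n p R w1) op_id) (M n (Suc p) Y (tens p (G n p R w2) op_id))"
    using G_ext[OF w(1)] G_ext[OF w(2)] by (metis M_nm_left M_nm_right)
  then show ?thesis by (simp add: Tr_M Tr_left Tr_right)
qed

lemma RL_mod:
  assumes w: "set w1 \<subseteq> {1..<q}" "set w2 \<subseteq> {1..<q}"
  shows "nm n q (rtr_last n (q+j) D j (M n (q+j) (G n (q+j) R w1) (M n (q+j) Y (G n (q+j) R w2)))) =
         M n q (G n q R w1) (M n q (nm n q (rtr_last n (q+j) D j Y)) (G n q R w2))"
proof (induction j arbitrary: Y)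
  case 0 then show ?case by simp
next
  case (Suc j)
  have w': "set w1 \<subseteq> {1..<q+j}" "set w2 \<subseteq> {1..<q+j}" using w by auto
  have "nm n q (rtr_last n (q + Suc j) D (Suc j) (M n (q + Suc j) (G n (q + Suc j) R w1) (M n (q + Suc j) Y (G n (q + Suc j) R w2)))) =
        nm n q (rtr_last n (q+j) D j (Tr n (q+j) D (M n (Suc (q+j)) (G n (Suc (q+j)) R w1) (M n (Suc (q+j)) Y (G n (Suc (q+j)) R w2)))))"
    unfolding Tr_def RL_nm by simp
  also have "\<dots> = nm n q (rtr_last n (q+j) D j (M n (q+j) (G n (q+j) R w1) (M n (q+j) (Tr n (q+j) D Y) (G n (q+j) R w2))))"
    unfolding Tr_mod2[OF w'] ..
  also have "\<dots> = M n q (G n q R w1) (M n q (nm n q (rtr_last n (q+j) D j (Tr n (q+j) D Y))) (G n q R w2))"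
    by (rule Suc.IH)
  also have "nm n q (rtr_last n (q+j) D j (Tr n (q+j) D Y)) = nm n q (rtr_last n (q + Suc j) D (Suc j) Y)"
    unfolding Tr_def RL_nm by simp
  finally show ?case .
qed

lemma braid_M:
  assumes "op_eq n 3 (op_mult n 3 (op_mult n 3 (Rk R 1) (Rk R 2)) (Rk R 1))
                     (op_mult n 3 (op_mult n 3 (Rk R 2) (Rk R 1)) (Rk R 2))"
  shows "M n 3 (Rk R 1) (M n 3 (Rk R 2) (Rk R 1)) = M n 3 (Rk R 2) (M n 3 (Rk R 1) (Rk R 2))"
proof -
  have e: "\<And>A B C. M n 3 A (M n 3 B C) = nm n 3 (op_mult n 3 (op_mult n 3 A B) C)"
    by (metis M_assoc M_def M_nm_left)
  show ?thesis using assms unfolding e op_eq_nm .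
qed

lemma K:
  assumes SK: "\<forall>u<n. \<forall>v<n. (\<Sum>a<n. \<Sum>c<n. D [a] [c] * R [u, c] [v, a]) = (if u = v then 1 else 0)"
    and bh: "M n 3 (Rk R 1) (M n 3 (Rk R 2) (Rk R 1)) = M n 3 (Rk R 2) (M n 3 (Rk R 1) (Rk R 2))"
    and a: "1 \<le> a"
  shows "nm n a (rtr_last n (a+c) D c (G n (a+c) R (pw (pc c (a-1)) j @ om a c))) = G n a R (pw (pc 0 (a-1)) (j + c))"
proof (induction c arbitrary: j)
  case 0 then show ?case by simp
next
  case (Suc c)
  have pca: "pc c a = pc c (a-1) @ [a + c]" using a pc_Suc[of c "a-1"] by simp
  have s1: "set (pc c (a-1)) \<subseteq> {1..<a+c}" using a by (auto simp: set_pc)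
  have s2: "set (pw (pc c (a-1)) j @ om a c) \<subseteq> {1..<a+c}"
    using s1 set_pw[of "pc c (a-1)" j] set_om[of a c] by auto
  have bw: "beq (pw (pc (Suc c) (a-1)) j @ om a (Suc c)) (pc c (a-1) @ [a+c] @ (pw (pc c (a-1)) j @ om a c))"
  proof -
    have "pw (pc (Suc c) (a-1)) j @ om a (Suc c) = (pw (pc (Suc c) (a-1)) j @ pc c a) @ om a c" by simp
    also have "beq \<dots> ((pc c a @ pw (pc c (a-1)) j) @ om a c)" by (rule beq_appR, rule Kword)
    also have "\<dots> = pc c (a-1) @ [a+c] @ (pw (pc c (a-1)) j @ om a c)" by (simp add: pca)
    finally show ?thesis .
  qed
  have sw: "set (pw (pc (Suc c) (a-1)) j @ om a (Suc c)) \<subseteq> {1..<Suc (a+c)}"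
    using set_pw[of "pc (Suc c) (a-1)" j] set_om[of a "Suc c"] a by (auto simp: set_pc)
  have "nm n a (rtr_last n (a + Suc c) D (Suc c) (G n (a + Suc c) R (pw (pc (Suc c) (a-1)) j @ om a (Suc c)))) =
        nm n a (rtr_last n (a+c) D c (Tr n (a+c) D (G n (Suc (a+c)) R (pw (pc (Suc c) (a-1)) j @ om a (Suc c)))))"
    unfolding Tr_def RL_nm by simp
  also have "G n (Suc (a+c)) R (pw (pc (Suc c) (a-1)) j @ om a (Suc c)) =
             G n (Suc (a+c)) R (pc c (a-1) @ [a+c] @ (pw (pc c (a-1)) j @ om a c))"
    by (rule G_beq[OF bh bw sw])
  also have "Tr n (a+c) D (G n (Suc (a+c)) R (pc c (a-1) @ [a+c] @ (pw (pc c (a-1)) j @ om a c))) =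
             G n (a+c) R (pc c (a-1) @ (pw (pc c (a-1)) j @ om a c))"
    by (rule Tr_step[OF SK _ s1 s2]) (use a in simp)
  also have "pc c (a-1) @ (pw (pc c (a-1)) j @ om a c) = pw (pc c (a-1)) (Suc j) @ om a c"
    by (simp add: pw_def)
  also have "nm n a (rtr_last n (a+c) D c (G n (a+c) R (pw (pc c (a-1)) (Suc j) @ om a c))) =
             G n a R (pw (pc 0 (a-1)) (Suc j + c))" by (rule Suc.IH)
  finally show ?case by simp
qed

lemma Ups_G: "nm n m (Ups n m R k) = G n m R (uw k)"
proof (induction n m R k rule: Ups.induct)
  case (1 n m R) then show ?case by (simp add: G_Nil)
next
  case (2 n m R) then show ?case by (simp add: G_Nil)
next
  case (3 n m R k)
  have "nm n m (Ups n m R (Suc (Suc k))) = M n m (op_prod n m (map (Rk R) [1..<Suc (Suc k)])) (Ups n m R (Suc k))"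
    by (simp add: M_def)
  also have "\<dots> = M n m (G n m R (pc 0 (Suc k))) (G n m R (uw (Suc k)))"
    by (metis "3" G_def M_nm_left M_nm_right One_nat_def pc_def plus_nat.add_0)
  finally show ?case by (simp add: G_append)
qed

lemma Jop_G: "nm n m (Jop n m R k) = G n m R (jw k)"
proof (induction n m R k rule: Jop.induct)
  case (1 n m R) then show ?case by (simp add: G_Nil)
next
  case (2 n m R) then show ?case by (simp add: G_Nil)
next
  case (3 n m R k)
  have e: "M n m (M n m (Rk R (Suc k)) (Jop n m R (Suc k))) (Rk R (Suc k)) =
    nm n m (op_mult n m (op_mult n m (Rk R (Suc k)) (Jop n m R (Suc k))) (Rk R (Suc k)))"
    by (metis M_def M_nm_left)
  have "nm n m (Jop n m R (Suc (Suc k))) = M n m (M n m (Rk R (Suc k)) (Jop n m R (Suc k))) (Rk R (Suc k))"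
    unfolding e by simp
  also have "\<dots> = M n m (M n m (Rk R (Suc k)) (G n m R (jw (Suc k)))) (G n m R [Suc k])"
    by (metis "3" G_single M_nm_left M_nm_right)
  finally show ?case by (simp add: G_append G_Cons M_assoc)
qed

lemma prod_G: "(\<And>x. x \<in> set xs \<Longrightarrow> nm n m (f x) = G n m R (g x)) \<Longrightarrow>
   nm n m (op_prod n m (map f xs)) = G n m R (concat (map g xs))"
proof (induction xs)
  case Nil then show ?case by (simp add: G_Nil)
next
  case (Cons x xs)
  have "nm n m (op_prod n m (map f (x # xs))) = M n m (f x) (op_prod n m (map f xs))" by (simp add: M_def)
  also have "\<dots> = M n m (G n m R (g x)) (G n m R (concat (map g xs)))"
    using Cons by (metis M_nm_left M_nm_right list.set_intros)
  finally show ?case by (simp add: G_append)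
qed

lemma pow_G: "nm n m A = G n m R w \<Longrightarrow> nm n m (op_pow n m A j) = G n m R (pw w j)"
proof (induction j)
  case 0 then show ?case by (simp add: G_Nil)
next
  case (Suc j)
  have "nm n m (op_pow n m A (Suc j)) = M n m A (op_pow n m A j)" by (simp add: M_def)
  also have "\<dots> = M n m (G n m R w) (G n m R (pw w j))" using Suc by (metis M_nm_left M_nm_right)
  finally show ?case by (simp add: G_append pw_def)
qed

lemma all_less_3: "(\<forall>j<Suc (Suc (Suc 0)). P j) = (P 0 \<and> P (Suc 0) \<and> P (Suc (Suc 0)))"
  by (auto simp: less_Suc_eq)

lemma E1val: "emb2 (Suc 0) 2 R [u, a, b] [z0, z1, z2] = (if z2 = b then R [u, a] [z0, z1] else 0)"
proof -
  have "(\<forall>j<length [u, a, b]. j \<noteq> Suc 0 - 1 \<and> j \<noteq> 2 - 1 \<longrightarrow> [u, a, b] ! j = [z0, z1, z2] ! j) = (z2 = b)"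
    by (simp only: list.size all_less_3) auto
  then show ?thesis unfolding emb2_def by simp
qed

lemma lt3: "j < Suc (Suc (Suc 0)) \<Longrightarrow> j \<noteq> Suc 0 \<Longrightarrow> j \<noteq> 2 \<Longrightarrow> j = 0" by linarith

lemma E2val: "emb2 2 3 P [z0, z1, z2] [v, a, b] = (if z0 = v then P [z1, z2] [a, b] else 0)"
proof -
  have "(\<forall>j<length [z0, z1, z2]. j \<noteq> 2 - 1 \<and> j \<noteq> 3 - 1 \<longrightarrow> [z0, z1, z2] ! j = [v, a, b] ! j) = (z0 = v)"
    by (auto dest: lt3)
  then show ?thesis unfolding emb2_def by simp
qed

lemma sum_idx_3: "(\<Sum>z\<in>idx n 3. f z) = (\<Sum>z0<n. \<Sum>z1<n. \<Sum>z2<n. f [z0, z1, z2])"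
  by (simp add: numeral_3_eq_3 sum_idx_Suc idx_0)

lemma swap3: "(\<Sum>a<n. \<Sum>c<n. \<Sum>b<n. f a c b) = (\<Sum>b<(n::nat). \<Sum>c<n. \<Sum>a<n. (f a c b :: complex))"
proof -
  have "(\<Sum>a<n. \<Sum>c<n. \<Sum>b<n. f a c b) = (\<Sum>a<n. \<Sum>b<n. \<Sum>c<n. f a c b)"
    by (rule sum.cong[OF HOL.refl], rule sum.swap)
  also have "\<dots> = (\<Sum>b<n. \<Sum>a<n. \<Sum>c<n. f a c b)" by (rule sum.swap)
  also have "\<dots> = (\<Sum>b<n. \<Sum>c<n. \<Sum>a<n. f a c b)"
    by (rule sum.cong[OF HOL.refl], rule sum.swap)
  finally show ?thesis .
qed

lemma ptr2: "ptr n 2 Y [u, b] [v, b'] = (\<Sum>a<n. Y [u, a, b] [v, a, b'])"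
  by (simp add: ptr_def)

lemma ptr1: "ptr n 2 Y [a] [c] = (\<Sum>b<n. Y [a, b] [c, b])"
  by (simp add: ptr_def)

lemma inner3:
  assumes "b < n" "v < n"
  shows "op_mult n 3 (emb2 1 2 R) (emb2 2 3 \<Psi>) [u, a, b] [v, a, b] = (\<Sum>z1<n. R [u, a] [v, z1] * \<Psi> [z1, b] [a, b])"
proof -
  have "op_mult n 3 (emb2 1 2 R) (emb2 2 3 \<Psi>) [u, a, b] [v, a, b] =
     (\<Sum>z0<n. \<Sum>z1<n. \<Sum>z2<n. emb2 (Suc 0) 2 R [u, a, b] [z0, z1, z2] * emb2 2 3 \<Psi> [z0, z1, z2] [v, a, b])"
    unfolding op_mult_def sum_idx_3 by simp
  also have "\<dots> = (\<Sum>z0<n. \<Sum>z1<n. \<Sum>z2<n. if z2 = b \<and> z0 = v then R [u, a] [z0, z1] * \<Psi> [z1, z2] [a, b] else 0)"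
    unfolding E1val E2val by (intro sum.cong HOL.refl) simp
  also have "\<dots> = (\<Sum>z0<n. if z0 = v then (\<Sum>z1<n. R [u, a] [z0, z1] * \<Psi> [z1, b] [a, b]) else 0)"
    using assms by (intro sum.cong HOL.refl) (auto simp: if_distrib)
  also have "\<dots> = (\<Sum>z1<n. R [u, a] [v, z1] * \<Psi> [z1, b] [a, b])" using assms by simp
  finally show ?thesis .
qed

lemma SK_pt:
  assumes skew1: "op_eq n 2 (ptr n 2 (op_mult n 3 (emb2 1 2 R) (emb2 2 3 \<Psi>))) op_flip"
    and uvb: "u < n" "v < n" "b < n"
  shows "(\<Sum>a<n. \<Sum>z1<n. R [u, a] [v, z1] * \<Psi> [z1, b] [a, b]) = (if u = b \<and> b = v then 1 else 0)"
proof -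
  have mem: "[u, b] \<in> idx n 2" "[v, b] \<in> idx n 2" using uvb by (auto simp: idx_def)
  have "(\<Sum>a<n. \<Sum>z1<n. R [u, a] [v, z1] * \<Psi> [z1, b] [a, b]) =
        ptr n 2 (op_mult n 3 (emb2 1 2 R) (emb2 2 3 \<Psi>)) [u, b] [v, b]"
    unfolding ptr2 by (rule sum.cong[OF HOL.refl], rule inner3[symmetric]) (simp_all add: uvb)
  also have "\<dots> = op_flip [u, b] [v, b]"
    using skew1 mem unfolding op_eq_def by blast
  also have "\<dots> = (if u = b \<and> b = v then 1 else 0)" by (auto simp: op_flip_def)
  finally show ?thesis .
qed

lemma SK:
  assumes skew1: "op_eq n 2 (ptr n 2 (op_mult n 3 (emb2 1 2 R) (emb2 2 3 \<Psi>))) op_flip"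
  shows "\<forall>u<n. \<forall>v<n. (\<Sum>a<n. \<Sum>c<n. ptr n 2 \<Psi> [a] [c] * R [u, c] [v, a]) = (if u = v then 1 else 0)"
proof (intro allI impI)
  fix u v assume uv: "u < n" "v < n"
  have "(\<Sum>a<n. \<Sum>c<n. ptr n 2 \<Psi> [a] [c] * R [u, c] [v, a]) =
        (\<Sum>a<n. \<Sum>c<n. \<Sum>b<n. R [u, c] [v, a] * \<Psi> [a, b] [c, b])"
    unfolding ptr1 by (simp add: sum_distrib_left sum_distrib_right mult_ac)
  also have "\<dots> = (\<Sum>b<n. \<Sum>c<n. \<Sum>a<n. R [u, c] [v, a] * \<Psi> [a, b] [c, b])"
    by (rule swap3)
  also have "\<dots> = (\<Sum>b<n. if u = b \<and> b = v then 1 else 0)"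
    by (rule sum.cong[OF HOL.refl]) (use SK_pt[OF skew1 uv] in simp)
  also have "\<dots> = (\<Sum>b<n. if b = u then (if u = v then 1 else 0) else (0::complex))"
    by (rule sum.cong[OF HOL.refl]) auto
  also have "\<dots> = (if u = v then 1 else 0)" using uv by simp
  finally show "(\<Sum>a<n. \<Sum>c<n. ptr n 2 \<Psi> [a] [c] * R [u, c] [v, a]) = (if u = v then 1 else 0)" .
qed

lemma pw4: "pw w 4 = w @ w @ w @ w" by (simp add: pw_def numeral_eq_Suc)
lemma pw2: "pw w 2 = w @ w" by (simp add: pw_def numeral_eq_Suc)

theorem lemmaB3:
  fixes n :: nat and R \<Psi> :: op and i :: nat
  assumes invertible: "\<exists>Ri. op_eq n 2 (op_mult n 2 R Ri) op_id \<and> op_eq n 2 (op_mult n 2 Ri R) op_id"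
    and braid: "op_eq n 3 (op_mult n 3 (op_mult n 3 (Rk R 1) (Rk R 2)) (Rk R 1))
                          (op_mult n 3 (op_mult n 3 (Rk R 2) (Rk R 1)) (Rk R 2))"
    and skew1: "op_eq n 2 (ptr n 2 (op_mult n 3 (emb2 1 2 R) (emb2 2 3 \<Psi>))) op_flip"
    and skew2: "op_eq n 2 (ptr n 2 (op_mult n 3 (emb2 1 2 \<Psi>) (emb2 2 3 R))) op_flip"
    and i: "1 \<le> i"
  shows "op_eq n i (rtr_last n (2*i) (ptr n 2 \<Psi>) i (Ups n (2*i) R (2*i)))
                   (op_pow n i (Ups n i R i) 4)
       \<and> op_eq n i (op_pow n i (Ups n i R i) 4)
                   (op_pow n i (op_prod n i (map (Jop n i R) [1..<Suc i])) 2)"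
proof -
  define D where "D = ptr n 2 \<Psi>"
  have SK': "\<forall>u<n. \<forall>v<n. (\<Sum>a<n. \<Sum>c<n. D [a] [c] * R [u, c] [v, a]) = (if u = v then 1 else 0)"
    unfolding D_def by (rule SK[OF skew1])
  have bh: "M n 3 (Rk R 1) (M n 3 (Rk R 2) (Rk R 1)) = M n 3 (Rk R 2) (M n 3 (Rk R 1) (Rk R 2))"
    by (rule braid_M[OF braid])
  have ii: "2 * i = i + i" by simp
  have su: "set (uw i) \<subseteq> {1..<i}" by (rule set_uw)
  have sJ: "set (JJ i) \<subseteq> {1..<i}" by (rule set_JJ)
  have sP: "set (pw (pc 0 (i-1)) i) \<subseteq> {1..<i}"
    using set_pw[of "pc 0 (i-1)" i] i by (auto simp: set_pc)
  have U4: "nm n i (op_pow n i (Ups n i R i) 4) = G n i R (uw i @ uw i @ uw i @ uw i)"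
    using pow_G[OF Ups_G, of n i R i 4] by (simp add: pw4)
  have "nm n i (rtr_last n (2*i) D i (Ups n (2*i) R (2*i))) =
        nm n i (rtr_last n (i+i) D i (nm n (i+i) (Ups n (i+i) R (i+i))))"
    unfolding ii RL_nm ..
  also have "\<dots> = nm n i (rtr_last n (i+i) D i (G n (i+i) R (uw (i+i))))"
    by (simp only: Ups_G)
  also have "G n (i+i) R (uw (i+i)) = G n (i+i) R (uw i @ om i i @ uw i)"
    by (rule G_beq[OF bh Dec]) (use set_uw[of "i+i"] in auto)
  also have "\<dots> = M n (i+i) (G n (i+i) R (uw i)) (M n (i+i) (G n (i+i) R (om i i)) (G n (i+i) R (uw i)))"
    by (simp add: G_append)
  also have "nm n i (rtr_last n (i+i) D i \<dots>) =
      M n i (G n i R (uw i)) (M n i (nm n i (rtr_last n (i+i) D i (G n (i+i) R (om i i)))) (G n i R (uw i)))"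
    by (rule RL_mod[OF su su])
  also have "nm n i (rtr_last n (i+i) D i (G n (i+i) R (om i i))) = G n i R (pw (pc 0 (i-1)) i)"
    using K[OF SK' bh i, of i 0] by simp
  also have "M n i (G n i R (uw i)) (M n i (G n i R (pw (pc 0 (i-1)) i)) (G n i R (uw i))) =
             G n i R (uw i @ pw (pc 0 (i-1)) i @ uw i)"
    by (simp add: G_append)
  also have "\<dots> = G n i R (uw i @ JJ i @ uw i)"
    by (rule G_beq[OF bh beq_appL[OF beq_appR[OF F2]]]) (use su sP in auto)
  also have "\<dots> = G n i R (uw i @ (uw i @ uw i) @ uw i)"
    by (rule G_beq[OF bh beq_appL[OF beq_appR[OF beq.bsym[OF F_twist]]]]) (use su sJ in auto)
  also have "\<dots> = nm n i (op_pow n i (Ups n i R i) 4)" unfolding U4 by simp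
  finally have part1: "nm n i (rtr_last n (2*i) D i (Ups n (2*i) R (2*i))) = nm n i (op_pow n i (Ups n i R i) 4)" .
  have "nm n i (op_prod n i (map (Jop n i R) [1..<Suc i])) = G n i R (JJ i)"
    unfolding JJ_def by (rule prod_G) (rule Jop_G)
  then have J2: "nm n i (op_pow n i (op_prod n i (map (Jop n i R) [1..<Suc i])) 2) = G n i R (JJ i @ JJ i)"
    using pow_G by (simp add: pw2)
  have "G n i R (uw i @ uw i @ uw i @ uw i) = G n i R ((uw i @ uw i) @ (uw i @ uw i))" by simp
  also have "\<dots> = G n i R (JJ i @ JJ i)"
    by (rule G_beq[OF bh beq_app[OF F_twist F_twist]]) (use su in auto)
  finally have part2: "nm n i (op_pow n i (Ups n i R i) 4) = nm n i (op_pow n i (op_prod n i (map (Jop n i R) [1..<Suc i])) 2)"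
    unfolding U4 J2 .
  show ?thesis unfolding op_eq_nm using part1 part2 by (simp add: D_def)
qed

end
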